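(* Let \[K_2=\langle x,t \mid [x,\ txt^{-1}\,x\,tx^{-1}t^{-1}],\ t^2\rangle.\] Then the subgroup $\langle x, txt^{-1}\rangle$ of $K_2$ is isomorphic to the (integral) Heisenberg group $\langle a,b\mid [a,[a,b]],[b,[a,b]]\rangle$, and it has index $2$ in $K_2$ with transversal $\{1,t\}$.
   Context: Commutator convention: $[u,v]=uvu^{-1}v^{-1}$; a relator $r$ in a presentation means $r=1$. *)

theory Defs
  imports "HOL-Algebra.Coset" "HOL-Algebra.Generated_Groups"
begin

text \<open>Words in a free group on generators of type 'g: letters (True,g) = g, (False,g) = g inverse.\<close>
type_synonym 'g word = "(bool \<times> 'g) list"

definition winv :: "'g word \<Rightarrow> 'g word" where
  "winv w = rev (map (\<lambda>(b,g). (\<not> b, g)) w)"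

definition wcomm :: "'g word \<Rightarrow> 'g word \<Rightarrow> 'g word" where
  "wcomm u v = u @ v @ winv u @ winv v"

inductive_set pres_rel :: "'g word set \<Rightarrow> ('g word \<times> 'g word) set" for Rs where
  prefl: "(w, w) \<in> pres_rel Rs"
| psym: "(u, v) \<in> pres_rel Rs \<Longrightarrow> (v, u) \<in> pres_rel Rs"
| ptrans: "(u, v) \<in> pres_rel Rs \<Longrightarrow> (v, w) \<in> pres_rel Rs \<Longrightarrow> (u, w) \<in> pres_rel Rs"
| pcancel: "(u @ [(b, g), (\<not> b, g)] @ v, u @ v) \<in> pres_rel Rs"
| prelator: "r \<in> Rs \<Longrightarrow> (u @ r @ v, u @ v) \<in> pres_rel Rs"

definition word_class :: "'g word set \<Rightarrow> 'g word \<Rightarrow> 'g word set" where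
  "word_class Rs w = pres_rel Rs `` {w}"

definition presented_group :: "'g word set \<Rightarrow> ('g word set) monoid" where
  "presented_group Rs =
     \<lparr> carrier = UNIV // pres_rel Rs,
       monoid.mult = (\<lambda>A B. \<Union>a\<in>A. \<Union>b\<in>B. word_class Rs (a @ b)),
       one = word_class Rs [] \<rparr>"

datatype gen2 = G1 | G2

definition gw1 :: "gen2 word" where "gw1 = [(True, G1)]"
definition gw2 :: "gen2 word" where "gw2 = [(True, G2)]"

definition K2_rels :: "gen2 word set" where
  "K2_rels = { wcomm gw1 (gw2 @ gw1 @ winv gw2 @ gw1 @ gw2 @ winv gw1 @ winv gw2),
               gw2 @ gw2 }"

definition K2 :: "(gen2 word set) monoid" where "K2 = presented_group K2_rels"
definition K2_x :: "gen2 word set" where "K2_x = word_class K2_rels gw1"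
definition K2_t :: "gen2 word set" where "K2_t = word_class K2_rels gw2"

definition Heis_rels :: "gen2 word set" where
  "Heis_rels = { wcomm gw1 (wcomm gw1 gw2), wcomm gw2 (wcomm gw1 gw2) }"

definition Heis :: "(gen2 word set) monoid" where "Heis = presented_group Heis_rels"

end

theory Submission
  imports Defs
begin


lemma pres_rel_refl[simp]: "(w, w) \<in> pres_rel Rs" by (rule prefl)

lemma pres_rel_equiv: "equiv UNIV (pres_rel Rs)"
proof (rule equivI)
  show "pres_rel Rs \<subseteq> UNIV \<times> UNIV" by simp
  show "refl_on UNIV (pres_rel Rs)" by (auto simp: refl_on_def)
  show "sym (pres_rel Rs)" by (rule symI) (rule psym)
  show "trans (pres_rel Rs)" by (rule transI) (rule ptrans)
qed

lemma pres_rel_app_left: "(u, v) \<in> pres_rel Rs \<Longrightarrow> (p @ u, p @ v) \<in> pres_rel Rs"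
proof (induction rule: pres_rel.induct)
  case (pcancel u b g v)
  then show ?case using pres_rel.pcancel[of "p @ u" b g v Rs] by simp
next
  case (prelator r u v)
  then show ?case using pres_rel.prelator[of r Rs "p @ u" v] by simp
next
  case (psym u v) from psym.IH show ?case by (rule pres_rel.psym)
next
  case (ptrans u v w) from ptrans.IH show ?case by (rule pres_rel.ptrans)
qed simp

lemma pres_rel_app_right: "(u, v) \<in> pres_rel Rs \<Longrightarrow> (u @ q, v @ q) \<in> pres_rel Rs"
proof (induction rule: pres_rel.induct)
  case (pcancel u b g v)
  then show ?case using pres_rel.pcancel[of u b g "v @ q" Rs] by simp
next
  case (prelator r u v)
  then show ?case using pres_rel.prelator[of r Rs u "v @ q"] by simp
next
  case (psym u v) from psym.IH show ?case by (rule pres_rel.psym)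
next
  case (ptrans u v w) from ptrans.IH show ?case by (rule pres_rel.ptrans)
qed simp

lemma pres_rel_app: "(u, u') \<in> pres_rel Rs \<Longrightarrow> (v, v') \<in> pres_rel Rs \<Longrightarrow> (u @ v, u' @ v') \<in> pres_rel Rs"
  by (meson pres_rel_app_left pres_rel_app_right ptrans)

lemma word_class_eq: "word_class Rs u = word_class Rs v \<longleftrightarrow> (u, v) \<in> pres_rel Rs"
  unfolding word_class_def by (simp add: equiv_class_eq_iff[OF pres_rel_equiv])

lemma word_class_mem: "u \<in> word_class Rs v \<longleftrightarrow> (v, u) \<in> pres_rel Rs"
  by (simp add: word_class_def)

lemma carrier_pres: "carrier (presented_group Rs) = range (word_class Rs)"
  by (auto simp: presented_group_def quotient_def word_class_def)

lemma mult_pres: "word_class Rs u \<otimes>\<^bsub>presented_group Rs\<^esub> word_class Rs v = word_class Rs (u @ v)"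
proof -
  have "\<And>a b. a \<in> word_class Rs u \<Longrightarrow> b \<in> word_class Rs v \<Longrightarrow> word_class Rs (a @ b) = word_class Rs (u @ v)"
  proof -
    fix a b assume "a \<in> word_class Rs u" "b \<in> word_class Rs v"
    then have "(u, a) \<in> pres_rel Rs" "(v, b) \<in> pres_rel Rs" by (simp_all add: word_class_mem)
    then have "(u @ v, a @ b) \<in> pres_rel Rs" by (rule pres_rel_app)
    then have "(a @ b, u @ v) \<in> pres_rel Rs" by (rule psym)
    then show "word_class Rs (a @ b) = word_class Rs (u @ v)" by (simp add: word_class_eq)
  qed
  moreover have "u \<in> word_class Rs u" "v \<in> word_class Rs v" by (simp_all add: word_class_mem)
  ultimately have "(\<Union>a\<in>word_class Rs u. \<Union>b\<in>word_class Rs v. word_class Rs (a @ b)) = word_class Rs (u @ v)"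
    by blast
  then show ?thesis unfolding presented_group_def by simp
qed

lemma one_pres: "\<one>\<^bsub>presented_group Rs\<^esub> = word_class Rs []"
  by (simp add: presented_group_def)

lemma winv_cancel: "(winv w @ w, []) \<in> pres_rel Rs"
proof (induction w)
  case (Cons l w)
  obtain b g where l: "l = (b, g)" by force
  have "(winv w @ [(\<not> b, g), (\<not> \<not> b, g)] @ w, winv w @ w) \<in> pres_rel Rs" by (rule pcancel)
  then have "(winv (l # w) @ (l # w), winv w @ w) \<in> pres_rel Rs" by (simp add: winv_def l)
  then show ?case using Cons ptrans by blast
qed (simp add: winv_def)

lemma group_pres: "group (presented_group Rs)"
proof (rule groupI)
  fix x y z assume x: "x \<in> carrier (presented_group Rs)" and y: "y \<in> carrier (presented_group Rs)"
    and z: "z \<in> carrier (presented_group Rs)"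
  from x y z obtain u v w where "x = word_class Rs u" "y = word_class Rs v" "z = word_class Rs w"
    by (auto simp: carrier_pres)
  then show "x \<otimes>\<^bsub>presented_group Rs\<^esub> y \<otimes>\<^bsub>presented_group Rs\<^esub> z =
      x \<otimes>\<^bsub>presented_group Rs\<^esub> (y \<otimes>\<^bsub>presented_group Rs\<^esub> z)"
    by (simp add: mult_pres)
next
  fix x y assume x: "x \<in> carrier (presented_group Rs)" and y: "y \<in> carrier (presented_group Rs)"
  from x y obtain u v where "x = word_class Rs u" "y = word_class Rs v"
    by (auto simp: carrier_pres)
  then show "x \<otimes>\<^bsub>presented_group Rs\<^esub> y \<in> carrier (presented_group Rs)"
    by (simp add: mult_pres carrier_pres)
next
  show "\<one>\<^bsub>presented_group Rs\<^esub> \<in> carrier (presented_group Rs)"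
    by (simp add: one_pres carrier_pres)
next
  fix x assume x: "x \<in> carrier (presented_group Rs)"
  then obtain u where u: "x = word_class Rs u" by (auto simp: carrier_pres)
  then show "\<one>\<^bsub>presented_group Rs\<^esub> \<otimes>\<^bsub>presented_group Rs\<^esub> x = x"
    by (simp add: one_pres mult_pres)
  have "word_class Rs (winv u) \<otimes>\<^bsub>presented_group Rs\<^esub> x = \<one>\<^bsub>presented_group Rs\<^esub>"
    by (simp add: u one_pres mult_pres word_class_eq winv_cancel)
  then show "\<exists>y\<in>carrier (presented_group Rs). y \<otimes>\<^bsub>presented_group Rs\<^esub> x = \<one>\<^bsub>presented_group Rs\<^esub>"
    by (auto simp: carrier_pres rangeI)
qed

lemma inv_pres: "inv\<^bsub>presented_group Rs\<^esub> (word_class Rs w) = word_class Rs (winv w)"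
proof -
  interpret group "presented_group Rs" by (rule group_pres)
  show ?thesis
    by (rule inv_equality) (simp_all add: one_pres mult_pres word_class_eq winv_cancel carrier_pres rangeI)
qed

lemma class_cons: "word_class Rs (l # w) = word_class Rs [l] \<otimes>\<^bsub>presented_group Rs\<^esub> word_class Rs w"
  by (simp add: mult_pres)

lemma class_False: "word_class Rs [(False, g)] = inv\<^bsub>presented_group Rs\<^esub> (word_class Rs [(True, g)])"
  by (simp add: inv_pres winv_def)



definition weval :: "('a, 'm) monoid_scheme \<Rightarrow> (bool \<times> 'g \<Rightarrow> 'a) \<Rightarrow> 'g word \<Rightarrow> 'a" where
  "weval H e w = foldr (\<lambda>l acc. e l \<otimes>\<^bsub>H\<^esub> acc) w \<one>\<^bsub>H\<^esub>"

lemma weval_Nil[simp]: "weval H e [] = \<one>\<^bsub>H\<^esub>" by (simp add: weval_def)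
lemma weval_Cons[simp]: "weval H e (l # w) = e l \<otimes>\<^bsub>H\<^esub> weval H e w" by (simp add: weval_def)

context group begin

lemma weval_closed: "(\<And>l. e l \<in> carrier G) \<Longrightarrow> weval G e w \<in> carrier G"
  by (induction w) auto

lemma weval_append: "(\<And>l. e l \<in> carrier G) \<Longrightarrow> weval G e (u @ v) = weval G e u \<otimes> weval G e v"
  by (induction u) (auto simp: m_assoc weval_closed)

lemma weval_resp:
  assumes e: "\<And>l. e l \<in> carrier G"
    and inv: "\<And>b g. e (b, g) \<otimes> e (\<not> b, g) = \<one>"
    and rel: "\<And>r. r \<in> Rs \<Longrightarrow> weval G e r = \<one>"
    and uv: "(u, v) \<in> pres_rel Rs"
  shows "weval G e u = weval G e v"
  using uv
proof (induction rule: pres_rel.induct)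
  case (pcancel u b g v)
  have "weval G e [(b, g), (\<not> b, g)] = \<one>" using inv e by (simp add: m_assoc[symmetric])
  then have "weval G e ([(b, g), (\<not> b, g)] @ v) = weval G e v"
    by (simp only: weval_append[OF e]) (simp add: weval_closed e)
  then show ?case by (simp only: weval_append[OF e])
next
  case (prelator r u v)
  then show ?case using e rel by (simp add: weval_append weval_closed del: weval_Cons)
next
  case (psym u v) from psym.IH show ?case by (rule sym)
next
  case (ptrans u v w) from ptrans.IH show ?case by (rule trans)
qed simp

lemma weval_subgroup: "subgroup S G \<Longrightarrow> (\<And>l. e l \<in> S) \<Longrightarrow> weval G e w \<in> S"
proof (induction w)
  case Nil then show ?case by (simp add: subgroup.one_closed)
next
  case (Cons l w) then show ?case by (simp add: subgroup.m_closed)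
qed

end

definition hom_of :: "('a, 'm) monoid_scheme \<Rightarrow> (bool \<times> 'g \<Rightarrow> 'a) \<Rightarrow> 'g word set \<Rightarrow> 'a" where
  "hom_of H e A = weval H e (SOME w. w \<in> A)"

locale pres_hom = group H for H (structure) +
  fixes Rs :: "'g word set" and e :: "bool \<times> 'g \<Rightarrow> 'a"
  assumes e_closed: "\<And>l. e l \<in> carrier H"
    and e_inv: "\<And>b g. e (b, g) \<otimes> e (\<not> b, g) = \<one>"
    and e_rel: "\<And>r. r \<in> Rs \<Longrightarrow> weval H e r = \<one>"
begin

lemma hom_of_class[simp]: "hom_of H e (word_class Rs w) = weval H e w"
proof -
  have "w \<in> word_class Rs w" by (simp add: word_class_mem)
  then have "(SOME v. v \<in> word_class Rs w) \<in> word_class Rs w" by (rule someI)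
  then have "(w, SOME v. v \<in> word_class Rs w) \<in> pres_rel Rs" by (simp add: word_class_mem)
  then have "weval H e w = weval H e (SOME v. v \<in> word_class Rs w)"
    using weval_resp[of e Rs] e_closed e_inv e_rel by blast
  then show ?thesis unfolding hom_of_def by simp
qed

lemma hom_of_hom: "hom_of H e \<in> hom (presented_group Rs) H"
proof (rule homI)
  fix x assume "x \<in> carrier (presented_group Rs)"
  then obtain u where "x = word_class Rs u" by (auto simp: carrier_pres)
  then show "hom_of H e x \<in> carrier H" by (simp add: weval_closed e_closed)
next
  fix x y assume "x \<in> carrier (presented_group Rs)" "y \<in> carrier (presented_group Rs)"
  then obtain u v where "x = word_class Rs u" "y = word_class Rs v" by (auto simp: carrier_pres)
  then show "hom_of H e (x \<otimes>\<^bsub>presented_group Rs\<^esub> y) = hom_of H e x \<otimes> hom_of H e y"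
    by (simp add: mult_pres weval_append e_closed)
qed

end

lemma class_weval: "weval (presented_group Rs) (\<lambda>l. word_class Rs [l]) w = word_class Rs w"
  by (induction w) (simp_all add: one_pres mult_pres)

lemma pres_induct:
  assumes "x \<in> carrier (presented_group Rs)"
    and "P (\<one>\<^bsub>presented_group Rs\<^esub>)"
    and "\<And>l y. y \<in> carrier (presented_group Rs) \<Longrightarrow> P y \<Longrightarrow> P (word_class Rs [l] \<otimes>\<^bsub>presented_group Rs\<^esub> y)"
  shows "P x"
proof -
  obtain w where x: "x = word_class Rs w" using assms(1) by (auto simp: carrier_pres)
  have "P (weval (presented_group Rs) (\<lambda>l. word_class Rs [l]) w) \<and>
        weval (presented_group Rs) (\<lambda>l. word_class Rs [l]) w \<in> carrier (presented_group Rs)"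
  proof (induction w)
    case Nil
    then show ?case using assms(2) by (simp add: one_pres carrier_pres)
  next
    case (Cons l w)
    then have "P (word_class Rs [l] \<otimes>\<^bsub>presented_group Rs\<^esub> weval (presented_group Rs) (\<lambda>l. word_class Rs [l]) w)"
      using assms(3) by blast
    then show ?case by (simp add: class_weval carrier_pres mult_pres)
  qed
  then show ?thesis by (simp add: x class_weval)
qed

lemma hom_pres_eq:
  assumes G: "group H" and f: "f \<in> hom (presented_group Rs) H" and g: "g \<in> hom (presented_group Rs) H"
    and gen: "\<And>c. f (word_class Rs [(True, c)]) = g (word_class Rs [(True, c)])"
    and x: "x \<in> carrier (presented_group Rs)"
  shows "f x = g x"
proof -
  interpret P: group "presented_group Rs" by (rule group_pres)
  interpret f: group_hom "presented_group Rs" H f using G f by (simp add: group_hom_def group_hom_axioms_def P.is_group)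
  interpret g: group_hom "presented_group Rs" H g using G g by (simp add: group_hom_def group_hom_axioms_def P.is_group)
  have gen2: "f (word_class Rs [l]) = g (word_class Rs [l])" for l
  proof (cases l)
    case (Pair b c)
    then show ?thesis
    proof (cases b)
      case False
      have "word_class Rs [(True, c)] \<in> carrier (presented_group Rs)" by (simp add: carrier_pres)
      then show ?thesis using Pair False by (simp add: class_False f.hom_inv g.hom_inv gen)
    qed (simp add: gen)
  qed
  show ?thesis using x
  proof (rule pres_induct)
    show "f \<one>\<^bsub>presented_group Rs\<^esub> = g \<one>\<^bsub>presented_group Rs\<^esub>" by simp
  next
    fix l y assume y: "y \<in> carrier (presented_group Rs)" and fy: "f y = g y"
    have l: "word_class Rs [l] \<in> carrier (presented_group Rs)" by (simp add: carrier_pres)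
    show "f (word_class Rs [l] \<otimes>\<^bsub>presented_group Rs\<^esub> y) = g (word_class Rs [l] \<otimes>\<^bsub>presented_group Rs\<^esub> y)"
      using l y by (simp add: f.hom_mult g.hom_mult gen2 fy)
  qed
qed



context group begin

lemma inv_cancel_left1[simp]: "x \<in> carrier G \<Longrightarrow> y \<in> carrier G \<Longrightarrow> inv x \<otimes> (x \<otimes> y) = y"
  by (simp add: m_assoc[symmetric])
lemma inv_cancel_left2[simp]: "x \<in> carrier G \<Longrightarrow> y \<in> carrier G \<Longrightarrow> x \<otimes> (inv x \<otimes> y) = y"
  by (simp add: m_assoc[symmetric])

lemma comm_of_commutator:
  assumes x: "x \<in> carrier G" and y: "y \<in> carrier G" and h: "x \<otimes> (y \<otimes> (inv x \<otimes> inv y)) = \<one>"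
  shows "x \<otimes> y = y \<otimes> x"
proof -
  have "x \<otimes> (y \<otimes> (inv x \<otimes> inv y)) \<otimes> (y \<otimes> x) = y \<otimes> x" using h x y by simp
  moreover have "x \<otimes> (y \<otimes> (inv x \<otimes> inv y)) \<otimes> (y \<otimes> x) = x \<otimes> y" using x y by (simp add: m_assoc)
  ultimately show ?thesis by simp
qed

lemma commutator_of_comm:
  assumes x: "x \<in> carrier G" and y: "y \<in> carrier G" and h: "x \<otimes> y = y \<otimes> x"
  shows "x \<otimes> (y \<otimes> (inv x \<otimes> inv y)) = \<one>"
proof -
  have "x \<otimes> (y \<otimes> (inv x \<otimes> inv y)) = (x \<otimes> y) \<otimes> (inv x \<otimes> inv y)" using x y by (simp add: m_assoc)
  also have "\<dots> = (y \<otimes> x) \<otimes> (inv x \<otimes> inv y)" by (simp add: h)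
  also have "\<dots> = \<one>" using x y by (simp add: m_assoc)
  finally show ?thesis .
qed

lemma conj_hom: "y \<in> carrier G \<Longrightarrow> group_hom G G (\<lambda>g. y \<otimes> g \<otimes> inv y)"
  unfolding group_hom_def group_hom_axioms_def
  by (auto intro!: homI simp: is_group m_assoc)

lemma conj_int_pow:
  assumes x: "x \<in> carrier G" and y: "y \<in> carrier G"
  shows "y \<otimes> x [^] (i::int) \<otimes> inv y = (y \<otimes> x \<otimes> inv y) [^] i"
  using group_hom.hom_int_pow[OF conj_hom[OF y] x] .

lemma comm_int_pow1:
  assumes x: "x \<in> carrier G" and y: "y \<in> carrier G" and h: "x \<otimes> y = y \<otimes> x"
  shows "x [^] (i::int) \<otimes> y = y \<otimes> x [^] i"
proof -
  have "y \<otimes> x \<otimes> inv y = x \<otimes> y \<otimes> inv y" by (simp add: h)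
  also have "\<dots> = x" using x y by (simp add: m_assoc)
  finally have "y \<otimes> x \<otimes> inv y = x" .
  then have "y \<otimes> x [^] i \<otimes> inv y = x [^] i" using conj_int_pow[OF x y] by simp
  then have "y \<otimes> x [^] i \<otimes> inv y \<otimes> y = x [^] i \<otimes> y" by simp
  then show ?thesis using x y by (simp add: m_assoc)
qed

lemma comm_int_pow:
  assumes x: "x \<in> carrier G" and y: "y \<in> carrier G" and h: "x \<otimes> y = y \<otimes> x"
  shows "x [^] (i::int) \<otimes> y [^] (j::int) = y [^] j \<otimes> x [^] i"
proof -
  have "x [^] i \<otimes> y = y \<otimes> x [^] i" by (rule comm_int_pow1[OF x y h])
  then have "y \<otimes> x [^] i = x [^] i \<otimes> y" by simp
  from comm_int_pow1[OF y _ this] show ?thesis using x by simp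
qed

lemma conj_shift:
  assumes x: "x \<in> carrier G" and y: "y \<in> carrier G" and d: "d \<in> carrier G"
    and h: "y \<otimes> x \<otimes> inv y = x \<otimes> d" and xd: "x \<otimes> d = d \<otimes> x"
  shows "y \<otimes> x [^] (i::int) = x [^] i \<otimes> d [^] i \<otimes> y"
proof -
  have "y \<otimes> x [^] i \<otimes> inv y = x [^] i \<otimes> d [^] i"
    using conj_int_pow[OF x y] h int_pow_mult_distrib[OF xd x d] by simp
  then have "y \<otimes> x [^] i \<otimes> inv y \<otimes> y = x [^] i \<otimes> d [^] i \<otimes> y" by simp
  then show ?thesis using x y d by (simp add: m_assoc)
qed

lemma int_pow_line:
  assumes f: "\<And>m. f m \<in> carrier G" and fm: "\<And>m n. f m \<otimes> f n = f (m + n)"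
  shows "f 1 [^] (i::int) = f i"
proof -
  have f0: "f 0 = \<one>" using fm[of 0 0] f[of 0] by simp
  have nat: "f 1 [^] (n::nat) = f (int n)" for n
  proof (induction n)
    case 0 then show ?case by (simp add: f0)
  next
    case (Suc n) then show ?case by (simp add: fm add.commute)
  qed
  show ?thesis
  proof (cases i rule: int_cases2)
    case (nonneg n) then show ?thesis by (simp add: int_pow_int nat)
  next
    case (nonpos n)
    have "inv (f (int n)) = f (- int n)"
      by (rule inv_equality) (simp_all add: fm f f0)
    then show ?thesis using nonpos f by (simp add: int_pow_neg_int nat)
  qed
qed

end



type_synonym h3 = "int \<times> int \<times> int"

fun hmul :: "h3 \<Rightarrow> h3 \<Rightarrow> h3" where
  "hmul (i, j, k) (i', j', k') = (i + i', j + j', k + k' - j * i')"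
fun hinv :: "h3 \<Rightarrow> h3" where
  "hinv (i, j, k) = (- i, - j, - k - i * j)"
fun sig :: "h3 \<Rightarrow> h3" where
  "sig (i, j, k) = (j, i, - k - i * j)"

definition HZ :: "h3 monoid" where
  "HZ = \<lparr> carrier = UNIV, mult = hmul, one = (0, 0, 0) \<rparr>"

fun kmul :: "h3 \<times> bool \<Rightarrow> h3 \<times> bool \<Rightarrow> h3 \<times> bool" where
  "kmul (p, s) (q, s') = (hmul p (if s then sig q else q), s \<noteq> s')"
fun kinv :: "h3 \<times> bool \<Rightarrow> h3 \<times> bool" where
  "kinv (p, s) = (if s then sig (hinv p) else hinv p, s)"

definition KZ :: "(h3 \<times> bool) monoid" where
  "KZ = \<lparr> carrier = UNIV, mult = kmul, one = ((0, 0, 0), False) \<rparr>"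

lemma HZ_simps[simp]: "carrier HZ = UNIV" "x \<otimes>\<^bsub>HZ\<^esub> y = hmul x y" "\<one>\<^bsub>HZ\<^esub> = (0, 0, 0)"
  by (simp_all add: HZ_def)
lemma KZ_simps[simp]: "carrier KZ = UNIV" "x \<otimes>\<^bsub>KZ\<^esub> y = kmul x y" "\<one>\<^bsub>KZ\<^esub> = ((0, 0, 0), False)"
  by (simp_all add: KZ_def)

lemma hmul_assoc: "hmul (hmul x y) z = hmul x (hmul y z)"
  by (cases x; cases y; cases z) (simp add: algebra_simps)

lemma group_HZ: "group HZ"
proof (rule groupI)
  fix x assume "x \<in> carrier HZ"
  show "\<exists>y\<in>carrier HZ. y \<otimes>\<^bsub>HZ\<^esub> x = \<one>\<^bsub>HZ\<^esub>"
    by (rule bexI[of _ "hinv x"]) (cases x, simp add: algebra_simps)+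
qed (auto simp: hmul_assoc)

lemma sig_hmul: "sig (hmul p q) = hmul (sig p) (sig q)"
  by (cases p; cases q) (simp add: algebra_simps)
lemma sig_sig[simp]: "sig (sig p) = p"
  by (cases p) (simp add: algebra_simps)

lemma kmul_assoc: "kmul (kmul x y) z = kmul x (kmul y z)"
  by (cases x; cases y; cases z) (auto simp: hmul_assoc sig_hmul)

lemma group_KZ: "group KZ"
proof (rule groupI)
  fix x assume "x \<in> carrier KZ"
  show "\<exists>y\<in>carrier KZ. y \<otimes>\<^bsub>KZ\<^esub> x = \<one>\<^bsub>KZ\<^esub>"
    by (rule bexI[of _ "kinv x"]) (cases x, auto simp: algebra_simps)
qed (auto simp: kmul_assoc)

lemma KZ_inv[simp]: "inv\<^bsub>KZ\<^esub> x = kinv x"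
  by (rule group.inv_equality[OF group_KZ]) (cases x, auto simp: algebra_simps)

lemma HZ_inv[simp]: "inv\<^bsub>HZ\<^esub> x = hinv x"
  by (rule group.inv_equality[OF group_HZ]) (cases x, auto simp: algebra_simps)

lemma HZ_pow1: "(1, 0, 0) [^]\<^bsub>HZ\<^esub> (i::int) = (i, 0, 0)"
  using group.int_pow_line[OF group_HZ, of "\<lambda>i. (i, 0, 0)"] by simp
lemma HZ_pow2: "(0, 1, 0) [^]\<^bsub>HZ\<^esub> (i::int) = (0, i, 0)"
  using group.int_pow_line[OF group_HZ, of "\<lambda>i. (0, i, 0)"] by simp
lemma HZ_pow3: "(0, 0, 1) [^]\<^bsub>HZ\<^esub> (i::int) = (0, 0, i)"
  using group.int_pow_line[OF group_HZ, of "\<lambda>i. (0, 0, i)"] by simp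

definition iota :: "h3 \<Rightarrow> h3 \<times> bool" where "iota p = (p, False)"

lemma iota_hom: "iota \<in> hom HZ KZ"
  by (rule homI) (auto simp: iota_def)



context group begin

lemma comm_inv: "x \<in> carrier G \<Longrightarrow> y \<in> carrier G \<Longrightarrow> x \<otimes> y = y \<otimes> x \<Longrightarrow> inv x \<otimes> y = y \<otimes> inv x"
  using comm_int_pow1[of x y "-1"] by (simp add: int_pow_neg)

lemma pow_minus1: assumes x: "x \<in> carrier G" shows "x [^] ((i::int) - 1) = inv x \<otimes> x [^] i"
proof -
  have "x [^] (i - 1) = x [^] ((- 1) + i)" by simp
  also have "\<dots> = x [^] (- 1 :: int) \<otimes> x [^] i" by (rule int_pow_mult[OF x])
  also have "x [^] (- 1 :: int) = inv x" using x by (simp add: int_pow_neg)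
  finally show ?thesis .
qed

lemma conj_inv_shift:
  assumes x: "x \<in> carrier G" and y: "y \<in> carrier G" and d: "d \<in> carrier G"
    and h: "y \<otimes> x \<otimes> inv y = x \<otimes> d" and dy: "d \<otimes> y = y \<otimes> d"
  shows "inv y \<otimes> x \<otimes> inv (inv y) = x \<otimes> inv d"
proof -
  have "inv y \<otimes> (y \<otimes> x \<otimes> inv y) \<otimes> y = x" using x y by (simp add: m_assoc)
  then have "inv y \<otimes> (x \<otimes> d) \<otimes> y = x" by (simp add: h)
  then have "inv y \<otimes> x \<otimes> (d \<otimes> y) = x" using x y d by (simp add: m_assoc)
  then have "inv y \<otimes> x \<otimes> (y \<otimes> d) = x" by (simp add: dy)
  then have "inv y \<otimes> x \<otimes> y \<otimes> d \<otimes> inv d = x \<otimes> inv d" using x y d by (simp add: m_assoc)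
  then show ?thesis using x y d by (simp add: m_assoc)
qed

end

locale heis_grp = group G for G (structure) +
  fixes A B
  assumes A: "A \<in> carrier G" and B: "B \<in> carrier G"
    and AC: "A \<otimes> (A \<otimes> (B \<otimes> (inv A \<otimes> inv B))) = (A \<otimes> (B \<otimes> (inv A \<otimes> inv B))) \<otimes> A"
    and BC: "B \<otimes> (A \<otimes> (B \<otimes> (inv A \<otimes> inv B))) = (A \<otimes> (B \<otimes> (inv A \<otimes> inv B))) \<otimes> B"
begin

definition "C = A \<otimes> (B \<otimes> (inv A \<otimes> inv B))"
definition "nf p = (case p of (i, j, k) \<Rightarrow> A [^] (i::int) \<otimes> B [^] (j::int) \<otimes> C [^] (k::int))"

lemma C: "C \<in> carrier G" using A B by (simp add: C_def)
lemma AC': "A \<otimes> C = C \<otimes> A" using AC by (simp add: C_def)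
lemma BC': "B \<otimes> C = C \<otimes> B" using BC by (simp add: C_def)

lemma nf_closed: "nf p \<in> carrier G" using A B C by (cases p) (simp add: nf_def)

lemma BAB: "B \<otimes> A \<otimes> inv B = A \<otimes> inv C"
proof -
  have "B \<otimes> A \<otimes> inv B = inv C \<otimes> A" using A B by (simp add: C_def inv_mult_group m_assoc)
  also have "\<dots> = A \<otimes> inv C" using comm_inv[OF C A] AC' by simp
  finally show ?thesis .
qed

lemma BA_pow: "B \<otimes> A [^] (i::int) = A [^] i \<otimes> C [^] (- i) \<otimes> B"
proof -
  have "inv C \<otimes> A = A \<otimes> inv C" using comm_inv[OF C A] AC' by simp
  then have "A \<otimes> inv C = inv C \<otimes> A" by simp
  from conj_shift[OF A B inv_closed[OF C] BAB this] show ?thesis using C by (simp add: int_pow_inv int_pow_neg)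
qed

lemma BinvA_pow: "inv B \<otimes> A [^] (i::int) = A [^] i \<otimes> C [^] i \<otimes> inv B"
proof -
  have "inv C \<otimes> B = B \<otimes> inv C" using comm_inv[OF C B] BC' by simp
  from conj_inv_shift[OF A B inv_closed[OF C] BAB this] have h: "inv B \<otimes> A \<otimes> inv (inv B) = A \<otimes> C"
    using C by simp
  from conj_shift[OF A inv_closed[OF B] C h AC'] show ?thesis .
qed

lemma nf_A: "A \<otimes> nf (i, j, k) = nf (i + 1, j, k)"
proof -
  have "A [^] (i + 1) = A \<otimes> A [^] i" using A by (simp add: int_pow_mult add.commute[of i 1])
  then show ?thesis using A B C by (simp add: nf_def m_assoc)
qed

lemma nf_Ainv: "inv A \<otimes> nf (i, j, k) = nf (i - 1, j, k)"
proof -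
  have "A [^] (i - 1) = inv A \<otimes> A [^] i" by (rule pow_minus1[OF A])
  then show ?thesis using A B C by (simp add: nf_def m_assoc)
qed

lemma Ck_B: "C [^] (m::int) \<otimes> B [^] (j::int) = B [^] j \<otimes> C [^] m"
  using comm_int_pow[OF C B] BC' by simp

lemma nf_B: "B \<otimes> nf (i, j, k) = nf (i, j + 1, k - i)"
proof -
  have "B \<otimes> nf (i, j, k) = (B \<otimes> A [^] i) \<otimes> B [^] j \<otimes> C [^] k"
    using A B C by (simp add: nf_def m_assoc)
  also have "\<dots> = A [^] i \<otimes> C [^] (- i) \<otimes> B \<otimes> B [^] j \<otimes> C [^] k" by (simp add: BA_pow)
  also have "\<dots> = A [^] i \<otimes> (C [^] (- i) \<otimes> B [^] (j + 1)) \<otimes> C [^] k"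
    using A B C by (simp add: m_assoc int_pow_mult add.commute[of j 1])
  also have "\<dots> = A [^] i \<otimes> (B [^] (j + 1) \<otimes> C [^] (- i)) \<otimes> C [^] k" by (simp add: Ck_B)
  also have "\<dots> = nf (i, j + 1, k - i)"
    using A B C by (simp add: nf_def m_assoc int_pow_mult[symmetric])
  finally show ?thesis .
qed

lemma nf_Binv: "inv B \<otimes> nf (i, j, k) = nf (i, j - 1, k + i)"
proof -
  have "inv B \<otimes> nf (i, j, k) = (inv B \<otimes> A [^] i) \<otimes> B [^] j \<otimes> C [^] k"
    using A B C by (simp add: nf_def m_assoc)
  also have "\<dots> = A [^] i \<otimes> C [^] i \<otimes> inv B \<otimes> B [^] j \<otimes> C [^] k" by (simp add: BinvA_pow)
  also have "\<dots> = A [^] i \<otimes> (C [^] i \<otimes> B [^] (j - 1)) \<otimes> C [^] k"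
  proof -
    have "B [^] (j - 1) = inv B \<otimes> B [^] j" by (rule pow_minus1[OF B])
    then show ?thesis using A B C by (simp add: m_assoc)
  qed
  also have "\<dots> = A [^] i \<otimes> (B [^] (j - 1) \<otimes> C [^] i) \<otimes> C [^] k" by (simp add: Ck_B)
  also have "\<dots> = nf (i, j - 1, k + i)"
    using A B C by (simp add: nf_def m_assoc int_pow_mult[symmetric] add.commute)
  finally show ?thesis .
qed

lemma nf_one: "nf (0, 0, 0) = \<one>" by (simp add: nf_def)

end



lemma class_rel_one: "r \<in> Rs \<Longrightarrow> word_class Rs r = \<one>\<^bsub>presented_group Rs\<^esub>"
  using prelator[of r Rs "[]" "[]"] by (simp add: one_pres word_class_eq)

context group begin

lemma rel1_comm:
  assumes A: "A \<in> carrier G" and B: "B \<in> carrier G"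
    and h: "A \<otimes> (A \<otimes> (B \<otimes> (inv A \<otimes> (inv B \<otimes> (inv A \<otimes> (B \<otimes> (A \<otimes> (inv B \<otimes> (inv A \<otimes> \<one>))))))))) = \<one>"
  shows "A \<otimes> (A \<otimes> (B \<otimes> (inv A \<otimes> inv B))) = (A \<otimes> (B \<otimes> (inv A \<otimes> inv B))) \<otimes> A"
proof -
  have "A \<otimes> ((A \<otimes> (B \<otimes> (inv A \<otimes> inv B))) \<otimes> (inv A \<otimes> inv (A \<otimes> (B \<otimes> (inv A \<otimes> inv B))))) = \<one>"
    using h A B by (simp add: m_assoc inv_mult_group)
  from comm_of_commutator[OF A _ this] show ?thesis using A B by simp
qed

lemma rel2_comm:
  assumes A: "A \<in> carrier G" and B: "B \<in> carrier G"
    and h: "B \<otimes> (A \<otimes> (B \<otimes> (inv A \<otimes> (inv B \<otimes> (inv B \<otimes> (B \<otimes> (A \<otimes> (inv B \<otimes> (inv A \<otimes> \<one>))))))))) = \<one>"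
  shows "B \<otimes> (A \<otimes> (B \<otimes> (inv A \<otimes> inv B))) = (A \<otimes> (B \<otimes> (inv A \<otimes> inv B))) \<otimes> B"
proof -
  have "B \<otimes> ((A \<otimes> (B \<otimes> (inv A \<otimes> inv B))) \<otimes> (inv B \<otimes> inv (A \<otimes> (B \<otimes> (inv A \<otimes> inv B))))) = \<one>"
    using h A B by (simp add: m_assoc inv_mult_group)
  from comm_of_commutator[OF B _ this] show ?thesis using A B by simp
qed

end

lemma group_Heis: "group Heis" by (simp add: Heis_def group_pres)

abbreviation "hA \<equiv> word_class Heis_rels [(True, G1)]"
abbreviation "hB \<equiv> word_class Heis_rels [(True, G2)]"

lemma Heis_letters:
  "word_class Heis_rels [(False, G1)] = inv\<^bsub>Heis\<^esub> hA"
  "word_class Heis_rels [(False, G2)] = inv\<^bsub>Heis\<^esub> hB"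
  by (simp_all add: Heis_def class_False)

lemma Heis_class_weval: "word_class Heis_rels w = weval Heis (\<lambda>l. word_class Heis_rels [l]) w"
  by (simp add: Heis_def class_weval)

lemma heis_grp_Heis: "heis_grp Heis hA hB"
proof -
  interpret P: group Heis by (rule group_Heis)
  have cA: "hA \<in> carrier Heis" and cB: "hB \<in> carrier Heis" by (simp_all add: Heis_def carrier_pres)
  have r1': "word_class Heis_rels (wcomm gw1 (wcomm gw1 gw2)) = \<one>\<^bsub>Heis\<^esub>"
    unfolding Heis_def by (rule class_rel_one) (simp add: Heis_rels_def)
  have r2': "word_class Heis_rels (wcomm gw2 (wcomm gw1 gw2)) = \<one>\<^bsub>Heis\<^esub>"
    unfolding Heis_def by (rule class_rel_one) (simp add: Heis_rels_def)
  have r1: "weval Heis (\<lambda>l. word_class Heis_rels [l]) (wcomm gw1 (wcomm gw1 gw2)) = \<one>\<^bsub>Heis\<^esub>"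
    by (subst Heis_class_weval[symmetric]) (rule r1')
  have r2: "weval Heis (\<lambda>l. word_class Heis_rels [l]) (wcomm gw2 (wcomm gw1 gw2)) = \<one>\<^bsub>Heis\<^esub>"
    by (subst Heis_class_weval[symmetric]) (rule r2')
  show ?thesis
  proof (unfold_locales)
    show "hA \<in> carrier Heis" "hB \<in> carrier Heis" by (rule cA, rule cB)
    show "hA \<otimes>\<^bsub>Heis\<^esub> (hA \<otimes>\<^bsub>Heis\<^esub> (hB \<otimes>\<^bsub>Heis\<^esub> (inv\<^bsub>Heis\<^esub> hA \<otimes>\<^bsub>Heis\<^esub> inv\<^bsub>Heis\<^esub> hB))) =
      hA \<otimes>\<^bsub>Heis\<^esub> (hB \<otimes>\<^bsub>Heis\<^esub> (inv\<^bsub>Heis\<^esub> hA \<otimes>\<^bsub>Heis\<^esub> inv\<^bsub>Heis\<^esub> hB)) \<otimes>\<^bsub>Heis\<^esub> hA"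
      using r1 by (intro P.rel1_comm cA cB) (simp add: wcomm_def winv_def gw1_def gw2_def Heis_letters)
    show "hB \<otimes>\<^bsub>Heis\<^esub> (hA \<otimes>\<^bsub>Heis\<^esub> (hB \<otimes>\<^bsub>Heis\<^esub> (inv\<^bsub>Heis\<^esub> hA \<otimes>\<^bsub>Heis\<^esub> inv\<^bsub>Heis\<^esub> hB))) =
      hA \<otimes>\<^bsub>Heis\<^esub> (hB \<otimes>\<^bsub>Heis\<^esub> (inv\<^bsub>Heis\<^esub> hA \<otimes>\<^bsub>Heis\<^esub> inv\<^bsub>Heis\<^esub> hB)) \<otimes>\<^bsub>Heis\<^esub> hB"
      using r2 by (intro P.rel2_comm cA cB) (simp add: wcomm_def winv_def gw1_def gw2_def Heis_letters)
  qed
qed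

interpretation HG: heis_grp Heis hA hB by (rule heis_grp_Heis)

lemma Heis_eq: "presented_group Heis_rels = Heis" by (simp add: Heis_def)

lemma Heis_nf_surj: assumes x: "x \<in> carrier Heis" shows "\<exists>p. x = HG.nf p"
proof -
  have "x \<in> carrier (presented_group Heis_rels)" using x by (simp add: Heis_eq)
  then show ?thesis
  proof (rule pres_induct)
    show "\<exists>p. \<one>\<^bsub>presented_group Heis_rels\<^esub> = HG.nf p" using HG.nf_one by (auto simp: Heis_eq)
  next
    fix l :: "bool \<times> gen2" and y assume "y \<in> carrier (presented_group Heis_rels)" and "\<exists>p. y = HG.nf p"
    then obtain i j k where y: "y = HG.nf (i, j, k)" by (metis prod_cases3)
    obtain b g where l: "l = (b, g)" by force
    show "\<exists>p. word_class Heis_rels [l] \<otimes>\<^bsub>presented_group Heis_rels\<^esub> y = HG.nf p"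
    proof (cases g)
      case G1
      then show ?thesis
        by (cases b) (auto simp: Heis_eq l y Heis_letters HG.nf_A HG.nf_Ainv)
    next
      case G2
      then show ?thesis
        by (cases b) (auto simp: Heis_eq l y Heis_letters HG.nf_B HG.nf_Binv)
    qed
  qed
qed



fun eH :: "bool \<times> gen2 \<Rightarrow> h3" where
  "eH (b, G1) = (if b then (1, 0, 0) else (-1, 0, 0))"
| "eH (b, G2) = (if b then (0, 1, 0) else (0, -1, 0))"

lemma pres_hom_eH: "pres_hom HZ Heis_rels eH"
proof (intro pres_hom.intro pres_hom_axioms.intro)
  show "group HZ" by (rule group_HZ)
  show "eH l \<in> carrier HZ" for l by simp
  show "eH (b, g) \<otimes>\<^bsub>HZ\<^esub> eH (\<not> b, g) = \<one>\<^bsub>HZ\<^esub>" for b g by (cases g) auto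
  show "weval HZ eH r = \<one>\<^bsub>HZ\<^esub>" if "r \<in> Heis_rels" for r
    using that by (auto simp: Heis_rels_def wcomm_def winv_def gw1_def gw2_def)
qed

definition "psiH = hom_of HZ eH"

lemma psiH_hom: "psiH \<in> hom Heis HZ"
  unfolding psiH_def Heis_def using pres_hom.hom_of_hom[OF pres_hom_eH] .

lemma psiH_class: "psiH (word_class Heis_rels w) = weval HZ eH w"
  unfolding psiH_def using pres_hom.hom_of_class[OF pres_hom_eH] .

interpretation psiHG: group_hom Heis HZ psiH
  by (simp add: group_hom_def group_hom_axioms_def group_Heis group_HZ psiH_hom)

lemma psiH_A: "psiH hA = (1, 0, 0)" by (simp add: psiH_class)
lemma psiH_B: "psiH hB = (0, 1, 0)" by (simp add: psiH_class)

lemma cHA: "hA \<in> carrier Heis" and cHB: "hB \<in> carrier Heis"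
  by (simp_all add: Heis_def carrier_pres)

lemma psiH_C: "psiH HG.C = (0, 0, 1)"
  by (simp add: HG.C_def cHA cHB psiH_A psiH_B psiHG.hom_mult psiHG.hom_inv)

lemma psiH_nf: "psiH (HG.nf (i, j, k)) = (i, j, k)"
  by (simp add: HG.nf_def cHA cHB HG.C psiHG.hom_mult psiHG.hom_int_pow psiH_A psiH_B psiH_C
      HZ_pow1 HZ_pow2 HZ_pow3 del: HZ_simps(2)) (simp)

lemma psiH_inj: "inj_on psiH (carrier Heis)"
proof (rule inj_onI)
  fix x y assume x: "x \<in> carrier Heis" and y: "y \<in> carrier Heis" and e: "psiH x = psiH y"
  obtain p where p: "x = HG.nf p" using Heis_nf_surj[OF x] by blast
  obtain q where q: "y = HG.nf q" using Heis_nf_surj[OF y] by blast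
  have "p = q" using e unfolding p q by (metis prod_cases3 psiH_nf)
  then show "x = y" by (simp add: p q)
qed



context group begin

lemma k2_R1:
  assumes X: "X \<in> carrier G" and Z: "Z \<in> carrier G"
    and h: "X \<otimes> (Z \<otimes> X \<otimes> inv Z) = (Z \<otimes> X \<otimes> inv Z) \<otimes> X"
  shows "X \<otimes> (X \<otimes> (Z \<otimes> (inv X \<otimes> (inv Z \<otimes> (inv X \<otimes> (Z \<otimes> (X \<otimes> (inv Z \<otimes> (inv X \<otimes> \<one>))))))))) = \<one>"
proof -
  define W where "W = Z \<otimes> X \<otimes> inv Z"
  have W: "W \<in> carrier G" using X Z by (simp add: W_def)
  have XW: "X \<otimes> W = W \<otimes> X" using h by (simp add: W_def)
  have XiW: "X \<otimes> inv W = inv W \<otimes> X" using comm_inv[OF W X] XW by simp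
  define C where "C = X \<otimes> (Z \<otimes> (inv X \<otimes> inv Z))"
  have C: "C = X \<otimes> inv W" using X Z by (simp add: C_def W_def inv_mult_group m_assoc)
  have "X \<otimes> C = X \<otimes> (X \<otimes> inv W)" by (simp add: C)
  also have "\<dots> = X \<otimes> (inv W \<otimes> X)" by (simp add: XiW)
  also have "\<dots> = C \<otimes> X" using X W by (simp add: C m_assoc)
  finally have XC: "X \<otimes> C = C \<otimes> X" .
  have "X \<otimes> (C \<otimes> (inv X \<otimes> inv C)) = \<one>"
    by (rule commutator_of_comm[OF X _ XC]) (simp add: C X W)
  then show ?thesis using X Z by (simp add: C_def inv_mult_group m_assoc)
qed

lemma k2_R2:
  assumes X: "X \<in> carrier G" and Z: "Z \<in> carrier G"
    and h: "Z \<otimes> (X \<otimes> Z \<otimes> inv X) = (X \<otimes> Z \<otimes> inv X) \<otimes> Z"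
  shows "Z \<otimes> (X \<otimes> (Z \<otimes> (inv X \<otimes> (inv Z \<otimes> (inv Z \<otimes> (Z \<otimes> (X \<otimes> (inv Z \<otimes> (inv X \<otimes> \<one>))))))))) = \<one>"
proof -
  define W where "W = X \<otimes> Z \<otimes> inv X"
  have W: "W \<in> carrier G" using X Z by (simp add: W_def)
  have ZW: "Z \<otimes> W = W \<otimes> Z" using h by (simp add: W_def)
  define C where "C = X \<otimes> (Z \<otimes> (inv X \<otimes> inv Z))"
  have C: "C = W \<otimes> inv Z" using X Z by (simp add: C_def W_def m_assoc)
  have ZC: "Z \<otimes> C = C \<otimes> Z" using Z W by (simp add: C m_assoc[symmetric] ZW) (simp add: m_assoc)
  have "Z \<otimes> (C \<otimes> (inv Z \<otimes> inv C)) = \<one>"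
    by (rule commutator_of_comm[OF Z _ ZC]) (simp add: C Z W)
  then show ?thesis using X Z by (simp add: C_def inv_mult_group m_assoc)
qed

end

lemma group_K2: "group K2" by (simp add: K2_def group_pres)
lemma K2_eq: "presented_group K2_rels = K2" by (simp add: K2_def)

abbreviation "kX \<equiv> K2_x"
abbreviation "kT \<equiv> K2_t"
abbreviation "kZ \<equiv> K2_t \<otimes>\<^bsub>K2\<^esub> K2_x \<otimes>\<^bsub>K2\<^esub> inv\<^bsub>K2\<^esub> K2_t"

lemma K2_letters:
  "word_class K2_rels [(True, G1)] = kX" "word_class K2_rels [(True, G2)] = kT"
  "word_class K2_rels [(False, G1)] = inv\<^bsub>K2\<^esub> kX"
  "word_class K2_rels [(False, G2)] = inv\<^bsub>K2\<^esub> kT"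
  by (simp_all add: K2_def class_False K2_x_def K2_t_def gw1_def gw2_def)

lemma K2_class_weval: "word_class K2_rels w = weval K2 (\<lambda>l. word_class K2_rels [l]) w"
  by (simp add: K2_def class_weval)

lemma cX: "kX \<in> carrier K2" and cT: "kT \<in> carrier K2"
  by (simp_all add: K2_def carrier_pres K2_x_def K2_t_def)

interpretation KG: group K2 by (rule group_K2)

lemma cZ: "kZ \<in> carrier K2" using cX cT by simp

lemma TT: "kT \<otimes>\<^bsub>K2\<^esub> kT = \<one>\<^bsub>K2\<^esub>"
proof -
  have "word_class K2_rels (gw2 @ gw2) = \<one>\<^bsub>K2\<^esub>"
    unfolding K2_def by (rule class_rel_one) (simp add: K2_rels_def)
  then show ?thesis by (simp add: K2_def mult_pres K2_t_def)
qed

lemma invT: "inv\<^bsub>K2\<^esub> kT = kT"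
  using KG.inv_equality[OF TT cT cT] .

lemma K2_rel1: "kX \<otimes>\<^bsub>K2\<^esub> (kZ \<otimes>\<^bsub>K2\<^esub> kX \<otimes>\<^bsub>K2\<^esub> inv\<^bsub>K2\<^esub> kZ) = (kZ \<otimes>\<^bsub>K2\<^esub> kX \<otimes>\<^bsub>K2\<^esub> inv\<^bsub>K2\<^esub> kZ) \<otimes>\<^bsub>K2\<^esub> kX"
proof -
  have r': "word_class K2_rels (wcomm gw1 (gw2 @ gw1 @ winv gw2 @ gw1 @ gw2 @ winv gw1 @ winv gw2)) = \<one>\<^bsub>K2\<^esub>"
    unfolding K2_def by (rule class_rel_one) (simp add: K2_rels_def)
  have r: "weval K2 (\<lambda>l. word_class K2_rels [l]) (wcomm gw1 (gw2 @ gw1 @ winv gw2 @ gw1 @ gw2 @ winv gw1 @ winv gw2)) = \<one>\<^bsub>K2\<^esub>"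
    by (subst K2_class_weval[symmetric]) (rule r')
  define W where "W = kZ \<otimes>\<^bsub>K2\<^esub> kX \<otimes>\<^bsub>K2\<^esub> inv\<^bsub>K2\<^esub> kZ"
  have W: "W \<in> carrier K2" using cX cT by (simp add: W_def)
  have "kX \<otimes>\<^bsub>K2\<^esub> (W \<otimes>\<^bsub>K2\<^esub> (inv\<^bsub>K2\<^esub> kX \<otimes>\<^bsub>K2\<^esub> inv\<^bsub>K2\<^esub> W)) = \<one>\<^bsub>K2\<^esub>"
    using r cX cT by (simp add: W_def wcomm_def winv_def gw1_def gw2_def K2_letters KG.m_assoc KG.inv_mult_group)
  from KG.comm_of_commutator[OF cX W this] show ?thesis by (simp add: W_def)
qed

definition "conjT g = kT \<otimes>\<^bsub>K2\<^esub> g \<otimes>\<^bsub>K2\<^esub> inv\<^bsub>K2\<^esub> kT"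

interpretation CT: group_hom K2 K2 conjT
  unfolding conjT_def by (rule KG.conj_hom[OF cT])

lemma conjT_X: "conjT kX = kZ" by (simp add: conjT_def)
lemma TT2: "y \<in> carrier K2 \<Longrightarrow> kT \<otimes>\<^bsub>K2\<^esub> (kT \<otimes>\<^bsub>K2\<^esub> y) = y"
  using cT by (simp add: KG.m_assoc[symmetric] TT)

lemma conjT_Z: "conjT kZ = kX"
  using cX cT by (simp add: conjT_def KG.m_assoc invT TT TT2)

lemma K2_rel2: "kZ \<otimes>\<^bsub>K2\<^esub> (kX \<otimes>\<^bsub>K2\<^esub> kZ \<otimes>\<^bsub>K2\<^esub> inv\<^bsub>K2\<^esub> kX) = (kX \<otimes>\<^bsub>K2\<^esub> kZ \<otimes>\<^bsub>K2\<^esub> inv\<^bsub>K2\<^esub> kX) \<otimes>\<^bsub>K2\<^esub> kZ"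
proof -
  have "conjT (kX \<otimes>\<^bsub>K2\<^esub> (kZ \<otimes>\<^bsub>K2\<^esub> kX \<otimes>\<^bsub>K2\<^esub> inv\<^bsub>K2\<^esub> kZ)) = conjT ((kZ \<otimes>\<^bsub>K2\<^esub> kX \<otimes>\<^bsub>K2\<^esub> inv\<^bsub>K2\<^esub> kZ) \<otimes>\<^bsub>K2\<^esub> kX)"
    by (simp only: K2_rel1)
  then show ?thesis using cX cZ by (simp add: CT.hom_mult CT.hom_inv conjT_X conjT_Z)
qed



fun eC :: "bool \<times> gen2 \<Rightarrow> gen2 word set" where
  "eC (b, G1) = (if b then kX else inv\<^bsub>K2\<^esub> kX)"
| "eC (b, G2) = (if b then kZ else inv\<^bsub>K2\<^esub> kZ)"

lemma pres_hom_eC: "pres_hom K2 Heis_rels eC"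
proof (intro pres_hom.intro pres_hom_axioms.intro)
  show "group K2" by (rule group_K2)
  show "eC l \<in> carrier K2" for l using cX cZ by (cases l; cases "snd l") auto
  show "eC (b, g) \<otimes>\<^bsub>K2\<^esub> eC (\<not> b, g) = \<one>\<^bsub>K2\<^esub>" for b g
    using cX cZ by (cases g) auto
  show "weval K2 eC r = \<one>\<^bsub>K2\<^esub>" if "r \<in> Heis_rels" for r
  proof -
    have "weval K2 eC (wcomm gw1 (wcomm gw1 gw2)) = \<one>\<^bsub>K2\<^esub>"
      using KG.k2_R1[OF cX cZ K2_rel1] by (simp add: wcomm_def winv_def gw1_def gw2_def)
    moreover have "weval K2 eC (wcomm gw2 (wcomm gw1 gw2)) = \<one>\<^bsub>K2\<^esub>"
      using KG.k2_R2[OF cX cZ K2_rel2] by (simp add: wcomm_def winv_def gw1_def gw2_def)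
    ultimately show ?thesis using that by (auto simp: Heis_rels_def)
  qed
qed

definition "chi = hom_of K2 eC"

lemma chi_hom: "chi \<in> hom Heis K2"
  unfolding chi_def Heis_def using pres_hom.hom_of_hom[OF pres_hom_eC] .

lemma chi_class: "chi (word_class Heis_rels w) = weval K2 eC w"
  unfolding chi_def using pres_hom.hom_of_class[OF pres_hom_eC] .

interpretation chiG: group_hom Heis K2 chi
  by (simp add: group_hom_def group_hom_axioms_def group_Heis group_K2 chi_hom)

fun eK :: "bool \<times> gen2 \<Rightarrow> h3 \<times> bool" where
  "eK (b, G1) = (if b then ((1, 0, 0), False) else ((-1, 0, 0), False))"
| "eK (b, G2) = ((0, 0, 0), True)"

lemma pres_hom_eK: "pres_hom KZ K2_rels eK"
proof (intro pres_hom.intro pres_hom_axioms.intro)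
  show "group KZ" by (rule group_KZ)
  show "eK l \<in> carrier KZ" for l by simp
  show "eK (b, g) \<otimes>\<^bsub>KZ\<^esub> eK (\<not> b, g) = \<one>\<^bsub>KZ\<^esub>" for b g by (cases g) auto
  show "weval KZ eK r = \<one>\<^bsub>KZ\<^esub>" if "r \<in> K2_rels" for r
    using that by (auto simp: K2_rels_def wcomm_def winv_def gw1_def gw2_def)
qed

definition "psiK = hom_of KZ eK"

lemma psiK_hom: "psiK \<in> hom K2 KZ"
  unfolding psiK_def K2_def using pres_hom.hom_of_hom[OF pres_hom_eK] .

lemma psiK_class: "psiK (word_class K2_rels w) = weval KZ eK w"
  unfolding psiK_def using pres_hom.hom_of_class[OF pres_hom_eK] .

interpretation psiKG: group_hom K2 KZ psiK
  by (simp add: group_hom_def group_hom_axioms_def group_KZ group_K2 psiK_hom)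

lemma psiK_X: "psiK kX = ((1, 0, 0), False)"
  by (simp add: psiK_class K2_x_def gw1_def)
lemma psiK_T: "psiK kT = ((0, 0, 0), True)"
  by (simp add: psiK_class K2_t_def gw2_def)

lemma chi_A: "chi hA = kX" using cX by (simp add: chi_class)
lemma chi_B: "chi hB = kZ" using cZ by (simp add: chi_class)

lemma comp_eq: "x \<in> carrier Heis \<Longrightarrow> psiK (chi x) = iota (psiH x)"
proof -
  assume x: "x \<in> carrier Heis"
  have f: "psiK \<circ> chi \<in> hom (presented_group Heis_rels) KZ"
    using hom_compose[OF chi_hom psiK_hom] by (simp add: Heis_eq)
  have g: "iota \<circ> psiH \<in> hom (presented_group Heis_rels) KZ"
    using hom_compose[OF psiH_hom iota_hom] by (simp add: Heis_eq)
  have "(psiK \<circ> chi) x = (iota \<circ> psiH) x"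
  proof (rule hom_pres_eq[OF group_KZ f g])
    show "x \<in> carrier (presented_group Heis_rels)" using x by (simp add: Heis_eq)
    fix c show "(psiK \<circ> chi) (word_class Heis_rels [(True, c)]) = (iota \<circ> psiH) (word_class Heis_rels [(True, c)])"
    proof (cases c)
      case G1 then show ?thesis by (simp add: chi_A psiK_X psiH_A iota_def)
    next
      case G2 then show ?thesis
        using cX cT by (simp add: chi_B psiK_X psiK_T psiH_B iota_def psiKG.hom_mult psiKG.hom_inv)
    qed
  qed
  then show ?thesis by simp
qed

lemma chi_inj: "inj_on chi (carrier Heis)"
proof (rule inj_onI)
  fix x y assume x: "x \<in> carrier Heis" and y: "y \<in> carrier Heis" and e: "chi x = chi y"
  have "iota (psiH x) = iota (psiH y)" using comp_eq[OF x] comp_eq[OF y] e by simp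
  then have "psiH x = psiH y" by (simp add: iota_def)
  then show "x = y" using psiH_inj x y by (simp add: inj_on_def)
qed

abbreviation "Hs \<equiv> generate K2 {kX, kZ}"

lemma chi_img: "chi ` carrier Heis = Hs"
proof
  have sub: "subgroup Hs K2" using cX cZ by (intro KG.generate_is_subgroup) auto
  show "chi ` carrier Heis \<subseteq> Hs"
  proof
    fix y assume "y \<in> chi ` carrier Heis"
    then obtain w where y: "y = chi (word_class Heis_rels w)" by (auto simp: Heis_def carrier_pres)
    have "eC l \<in> Hs" for l
    proof (cases l)
      case (Pair b g)
      have "kX \<in> Hs" "kZ \<in> Hs" by (auto intro: generate.incl)
      then show ?thesis using Pair sub by (cases g) (auto intro: subgroup.m_inv_closed)
    qed
    then show "y \<in> Hs" unfolding y chi_class by (rule KG.weval_subgroup[OF sub])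
  qed
  show "Hs \<subseteq> chi ` carrier Heis"
    using cHA cHB chi_A chi_B by (intro KG.generate_subgroup_incl chiG.img_is_subgroup) auto
qed

lemma Hs_sub: "subgroup Hs K2" using cX cZ by (intro KG.generate_is_subgroup) auto

lemma T_notin: "kT \<notin> Hs"
proof
  assume "kT \<in> Hs"
  then obtain h where h: "h \<in> carrier Heis" "kT = chi h" using chi_img by blast
  have "psiK kT = iota (psiH h)" using comp_eq[OF h(1)] h(2) by simp
  then show False by (simp add: psiK_T iota_def)
qed

lemma conjT_Hs: "h \<in> Hs \<Longrightarrow> conjT h \<in> Hs"
proof -
  assume h: "h \<in> Hs"
  have "conjT ` Hs = generate K2 (conjT ` {kX, kZ})"
    using cX cZ by (intro CT.generate_img[symmetric]) auto
  also have "conjT ` {kX, kZ} = {kX, kZ}" by (auto simp: conjT_X conjT_Z)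
  finally show ?thesis using h by blast
qed

lemma rcos_mem: "g \<in> Hs #>\<^bsub>K2\<^esub> kT \<longleftrightarrow> (\<exists>h\<in>Hs. g = h \<otimes>\<^bsub>K2\<^esub> kT)"
  by (auto simp: r_coset_def)

lemma cover: "g \<in> carrier K2 \<Longrightarrow> g \<in> Hs \<or> g \<in> Hs #>\<^bsub>K2\<^esub> kT"
proof -
  assume "g \<in> carrier K2"
  then have "g \<in> carrier (presented_group K2_rels)" by (simp add: K2_eq)
  then show ?thesis
  proof (rule pres_induct)
    show "\<one>\<^bsub>presented_group K2_rels\<^esub> \<in> Hs \<or> \<one>\<^bsub>presented_group K2_rels\<^esub> \<in> Hs #>\<^bsub>K2\<^esub> kT"
      by (simp add: K2_eq generate.one)
  next
    fix l :: "bool \<times> gen2" and y assume yc: "y \<in> carrier (presented_group K2_rels)"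
      and yh: "y \<in> Hs \<or> y \<in> Hs #>\<^bsub>K2\<^esub> kT"
    have yc': "y \<in> carrier K2" using yc by (simp add: K2_eq)
    have HsC: "Hs \<subseteq> carrier K2" using Hs_sub by (rule subgroup.subset)
    obtain b g where l: "l = (b, g)" by force
    have Xs: "kX \<in> Hs" "inv\<^bsub>K2\<^esub> kX \<in> Hs" using Hs_sub
      by (auto intro: generate.incl subgroup.m_inv_closed)
    show "word_class K2_rels [l] \<otimes>\<^bsub>presented_group K2_rels\<^esub> y \<in> Hs \<or>
          word_class K2_rels [l] \<otimes>\<^bsub>presented_group K2_rels\<^esub> y \<in> Hs #>\<^bsub>K2\<^esub> kT"
    proof (cases g)
      case G1
      define a where "a = word_class K2_rels [l]"
      have a: "a \<in> Hs" using Xs by (cases b) (auto simp: a_def l G1 K2_letters)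
      have main: "a \<otimes>\<^bsub>K2\<^esub> y \<in> Hs \<or> a \<otimes>\<^bsub>K2\<^esub> y \<in> Hs #>\<^bsub>K2\<^esub> kT" using yh
      proof
        assume "y \<in> Hs" then show ?thesis using a Hs_sub by (simp add: subgroup.m_closed)
      next
        assume "y \<in> Hs #>\<^bsub>K2\<^esub> kT"
        then obtain h where h: "h \<in> Hs" "y = h \<otimes>\<^bsub>K2\<^esub> kT" by (auto simp: rcos_mem)
        have "a \<otimes>\<^bsub>K2\<^esub> y = (a \<otimes>\<^bsub>K2\<^esub> h) \<otimes>\<^bsub>K2\<^esub> kT"
        proof -
          have "a \<in> carrier K2" "h \<in> carrier K2" using a h HsC by auto
          then show ?thesis using cT by (simp add: h(2) KG.m_assoc)
        qed
        moreover have "a \<otimes>\<^bsub>K2\<^esub> h \<in> Hs" using a h Hs_sub by (simp add: subgroup.m_closed)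
        ultimately show ?thesis by (auto simp: rcos_mem)
      qed
      then show ?thesis by (simp add: K2_eq a_def)
    next
      case G2
      have a: "word_class K2_rels [l] = kT" by (cases b) (simp_all add: l G2 K2_letters invT)
      have main: "kT \<otimes>\<^bsub>K2\<^esub> y \<in> Hs \<or> kT \<otimes>\<^bsub>K2\<^esub> y \<in> Hs #>\<^bsub>K2\<^esub> kT" using yh
      proof
        assume yH: "y \<in> Hs"
        have "kT \<otimes>\<^bsub>K2\<^esub> y = conjT y \<otimes>\<^bsub>K2\<^esub> kT"
          using yc' cT by (simp add: conjT_def KG.m_assoc)
        moreover have "conjT y \<in> Hs" using yH by (rule conjT_Hs)
        ultimately show ?thesis by (auto simp: rcos_mem)
      next
        assume "y \<in> Hs #>\<^bsub>K2\<^esub> kT"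
        then obtain h where h: "h \<in> Hs" "y = h \<otimes>\<^bsub>K2\<^esub> kT" by (auto simp: rcos_mem)
        have "kT \<otimes>\<^bsub>K2\<^esub> y = conjT h"
        proof -
          have "h \<in> carrier K2" using h HsC by auto
          then show ?thesis using cT by (simp add: h(2) conjT_def KG.m_assoc invT)
        qed
        moreover have "conjT h \<in> Hs" using h by (simp add: conjT_Hs)
        ultimately show ?thesis by simp
      qed
      then show ?thesis by (simp add: K2_eq a)
    qed
  qed
qed



theorem lemma4p2:
  shows "subgroup (generate K2 {K2_x, K2_t \<otimes>\<^bsub>K2\<^esub> K2_x \<otimes>\<^bsub>K2\<^esub> inv\<^bsub>K2\<^esub> K2_t}) K2
   \<and> K2\<lparr>carrier := generate K2 {K2_x, K2_t \<otimes>\<^bsub>K2\<^esub> K2_x \<otimes>\<^bsub>K2\<^esub> inv\<^bsub>K2\<^esub> K2_t}\<rparr> \<cong> Heis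
   \<and> card (rcosets\<^bsub>K2\<^esub> (generate K2 {K2_x, K2_t \<otimes>\<^bsub>K2\<^esub> K2_x \<otimes>\<^bsub>K2\<^esub> inv\<^bsub>K2\<^esub> K2_t})) = 2
   \<and> rcosets\<^bsub>K2\<^esub> (generate K2 {K2_x, K2_t \<otimes>\<^bsub>K2\<^esub> K2_x \<otimes>\<^bsub>K2\<^esub> inv\<^bsub>K2\<^esub> K2_t})
       = {generate K2 {K2_x, K2_t \<otimes>\<^bsub>K2\<^esub> K2_x \<otimes>\<^bsub>K2\<^esub> inv\<^bsub>K2\<^esub> K2_t} #>\<^bsub>K2\<^esub> \<one>\<^bsub>K2\<^esub>,
          generate K2 {K2_x, K2_t \<otimes>\<^bsub>K2\<^esub> K2_x \<otimes>\<^bsub>K2\<^esub> inv\<^bsub>K2\<^esub> K2_t} #>\<^bsub>K2\<^esub> K2_t}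
   \<and> generate K2 {K2_x, K2_t \<otimes>\<^bsub>K2\<^esub> K2_x \<otimes>\<^bsub>K2\<^esub> inv\<^bsub>K2\<^esub> K2_t} #>\<^bsub>K2\<^esub> \<one>\<^bsub>K2\<^esub>
       \<noteq> generate K2 {K2_x, K2_t \<otimes>\<^bsub>K2\<^esub> K2_x \<otimes>\<^bsub>K2\<^esub> inv\<^bsub>K2\<^esub> K2_t} #>\<^bsub>K2\<^esub> K2_t"
proof -
  have HsC: "Hs \<subseteq> carrier K2" using Hs_sub by (rule subgroup.subset)
  have iso: "chi \<in> iso Heis (K2\<lparr>carrier := Hs\<rparr>)"
  proof (rule isoI)
    show "chi \<in> hom Heis (K2\<lparr>carrier := Hs\<rparr>)"
    proof (rule homI)
      fix x assume "x \<in> carrier Heis"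
      then show "chi x \<in> carrier (K2\<lparr>carrier := Hs\<rparr>)" using chi_img by auto
    next
      fix x y assume "x \<in> carrier Heis" "y \<in> carrier Heis"
      then show "chi (x \<otimes>\<^bsub>Heis\<^esub> y) = chi x \<otimes>\<^bsub>K2\<lparr>carrier := Hs\<rparr>\<^esub> chi y"
        by (simp add: chiG.hom_mult)
    qed
    show "bij_betw chi (carrier Heis) (carrier (K2\<lparr>carrier := Hs\<rparr>))"
      using chi_inj chi_img by (simp add: bij_betw_def)
  qed
  have iso2: "K2\<lparr>carrier := Hs\<rparr> \<cong> Heis"
    using group.iso_sym[OF group_Heis is_isoI[OF iso]] .
  have H1: "Hs #>\<^bsub>K2\<^esub> \<one>\<^bsub>K2\<^esub> = Hs" using HsC by (rule KG.coset_mult_one)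
  have Tin: "kT \<in> Hs #>\<^bsub>K2\<^esub> kT"
    unfolding rcos_mem using cT subgroup.one_closed[OF Hs_sub] by (intro bexI[of _ "\<one>\<^bsub>K2\<^esub>"]) simp_all
  have ne: "Hs #>\<^bsub>K2\<^esub> \<one>\<^bsub>K2\<^esub> \<noteq> Hs #>\<^bsub>K2\<^esub> kT"
    using H1 Tin T_notin by auto
  have rc: "rcosets\<^bsub>K2\<^esub> Hs = {Hs #>\<^bsub>K2\<^esub> \<one>\<^bsub>K2\<^esub>, Hs #>\<^bsub>K2\<^esub> kT}"
  proof
    show "rcosets\<^bsub>K2\<^esub> Hs \<subseteq> {Hs #>\<^bsub>K2\<^esub> \<one>\<^bsub>K2\<^esub>, Hs #>\<^bsub>K2\<^esub> kT}"
    proof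
      fix c assume "c \<in> rcosets\<^bsub>K2\<^esub> Hs"
      then obtain a where a: "a \<in> carrier K2" "c = Hs #>\<^bsub>K2\<^esub> a" by (auto simp: RCOSETS_def)
      from cover[OF a(1)] show "c \<in> {Hs #>\<^bsub>K2\<^esub> \<one>\<^bsub>K2\<^esub>, Hs #>\<^bsub>K2\<^esub> kT}"
      proof
        assume "a \<in> Hs"
        then have "Hs #>\<^bsub>K2\<^esub> a = Hs" by (rule KG.coset_join2[OF a(1) Hs_sub])
        then show ?thesis using a H1 by simp
      next
        assume "a \<in> Hs #>\<^bsub>K2\<^esub> kT"
        then have "Hs #>\<^bsub>K2\<^esub> kT = Hs #>\<^bsub>K2\<^esub> a" by (rule KG.repr_independence[OF _ cT Hs_sub])
        then show ?thesis using a by simp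
      qed
    qed
    show "{Hs #>\<^bsub>K2\<^esub> \<one>\<^bsub>K2\<^esub>, Hs #>\<^bsub>K2\<^esub> kT} \<subseteq> rcosets\<^bsub>K2\<^esub> Hs"
      using cT by (auto simp: RCOSETS_def)
  qed
  have card: "card (rcosets\<^bsub>K2\<^esub> Hs) = 2" using rc ne by simp
  show ?thesis using Hs_sub iso2 card rc ne by blast
qed

end
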